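(* Let $s\ge1$ and $0\le k\le s$. Then (1) $O(s,k)=\binom{2s-k-1}{k}(C_{s-k})^2$, and (2) $O(s,k)=\sum_{m=k}^{s}\binom{m}{k}E(s,m)$.
   Context: A $p$-string of length $s$ is a correctly matched string of $s$ pairs of parentheses; there are $C_s=\frac{1}{s+1}\binom{2s}{s}$ of them ($C_0=1$). Given $p$-strings $U$ (upper), $W$ (lower) of length $s$, the meander graph $\Gamma^1_{2s-1}$ is obtained by marking points $0,1,\dots,2s$ on the $x$-axis, taking the segment $[0,2s]$, joining points $a,b$ by an upper semicircle for each matched pair of $U$ at positions $a<b$ (positions $1,\dots,2s$), and points $a-1,b-1$ by a lower semicircle for each matched pair of $W$ at positions $a<b$; the vertices are $1,\dots,2s-1$. A pierced circle at position $i$ ($1\le i\le 2s-2$) is present if vertices $i,i+1$ are joined both by an upper and a lower semicircle. $E(s,k)$ is the number of pairs $(U,W)$ whose meander graph has exactly $k$ pierced circles. For the path graph $P_v$ with vertices $1,\dots,v$, $\mathcal{A}_v(k)$ denotes the set of ways to place $k$ pierced circles at positions in $\{1,\dots,v-1\}$ with no two sharing a vertex (positions pairwise differing by at least $2$). $O(s,k)$ is the number of triples $(A,P,Q)$ with $A\in\mathcal{A}_{2s-1}(k)$ and $P,Q$ $p$-strings of length $s-k$. *)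

theory Defs
  imports Main
begin

definition catalan :: "nat \<Rightarrow> nat" where
  "catalan s = (2 * s choose s) div (s + 1)"

text \<open>A parenthesis string is a bool list, True = '(' and False = ')'.
  height U j = (#opens - #closes) among the first j characters.\<close>
definition height :: "bool list \<Rightarrow> nat \<Rightarrow> int" where
  "height U j = (\<Sum>i<j. if U ! i then 1 else -1)"

definition pstring :: "nat \<Rightarrow> bool list \<Rightarrow> bool" where
  "pstring s U \<longleftrightarrow> length U = 2 * s \<and> (\<forall>j\<le>2 * s. height U j \<ge> 0) \<and> height U (2 * s) = 0"

definition pstrings :: "nat \<Rightarrow> bool list set" where
  "pstrings s = {U. pstring s U}"

text \<open>Positions a < b (1-indexed) form a matched pair of U: position a is '(' and b is its
  matching ')'.\<close>
definition matched :: "bool list \<Rightarrow> nat \<Rightarrow> nat \<Rightarrow> bool" where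
  "matched U a b \<longleftrightarrow> 1 \<le> a \<and> a < b \<and> b \<le> length U \<and> U ! (a - 1) \<and>
     height U b = height U (a - 1) \<and> (\<forall>c. a \<le> c \<and> c < b \<longrightarrow> height U c > height U (a - 1))"

text \<open>Pierced circle at position i of the meander graph of (U,W): vertices i, i+1 are joined
  by an upper semicircle (pair (i,i+1) of U) and a lower semicircle (pair (i+1,i+2) of W,
  drawn between points i and i+1).\<close>
definition pierced :: "nat \<Rightarrow> bool list \<Rightarrow> bool list \<Rightarrow> nat \<Rightarrow> bool" where
  "pierced s U W i \<longleftrightarrow> 1 \<le> i \<and> i \<le> 2 * s - 2 \<and> matched U i (i + 1) \<and> matched W (i + 1) (i + 2)"

definition num_pierced :: "nat \<Rightarrow> bool list \<Rightarrow> bool list \<Rightarrow> nat" where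
  "num_pierced s U W = card {i \<in> {1..2 * s - 2}. pierced s U W i}"

definition E_count :: "nat \<Rightarrow> nat \<Rightarrow> nat" where
  "E_count s k = card {(U, W). pstring s U \<and> pstring s W \<and> num_pierced s U W = k}"

text \<open>A_v(k): placements of k pierced circles at positions in {1..v-1}, no two sharing a vertex.\<close>
definition A_set :: "nat \<Rightarrow> nat \<Rightarrow> nat set set" where
  "A_set v k = {A. A \<subseteq> {1..v - 1} \<and> card A = k \<and>
      (\<forall>i\<in>A. \<forall>j\<in>A. i \<noteq> j \<longrightarrow> i + 2 \<le> j \<or> j + 2 \<le> i)}"

definition O_count :: "nat \<Rightarrow> nat \<Rightarrow> nat" where
  "O_count s k = card (A_set (2 * s - 1) k \<times> pstrings (s - k) \<times> pstrings (s - k))"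

end

theory Submission imports Defs begin


definition val :: "bool \<Rightarrow> int" where "val b = (if b then 1 else -1)"
definition hs :: "bool list \<Rightarrow> int" where "hs xs = sum_list (map val xs)"
definition dyck :: "bool list \<Rightarrow> bool" where
  "dyck xs \<longleftrightarrow> (\<forall>j. 0 \<le> hs (take j xs)) \<and> hs xs = 0"

lemma hs_simps[simp]: "hs [] = 0" "hs (x # xs) = val x + hs xs" "hs (xs @ ys) = hs xs + hs ys"
  by (auto simp: hs_def)

lemma val_simps[simp]: "val True = 1" "val False = -1" by (auto simp: val_def)

lemma height_take: "j \<le> length xs \<Longrightarrow> height xs j = hs (take j xs)"
proof (induction j)
  case 0 then show ?case by (simp add: height_def)
next
  case (Suc j)
  have "height xs (Suc j) = height xs j + val (xs ! j)"
    by (simp add: height_def val_def)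
  then show ?case using Suc by (simp add: take_Suc_conv_app_nth)
qed

lemma pstring_dyck: "pstring s U \<longleftrightarrow> length U = 2 * s \<and> dyck U"
proof
  assume a: "pstring s U"
  then have l: "length U = 2 * s" by (simp add: pstring_def)
  have "0 \<le> hs (take j U)" for j
  proof (cases "j \<le> 2 * s")
    case True then show ?thesis using a l height_take[of j U] unfolding pstring_def by auto
  next
    case False then show ?thesis using a l height_take[of "2*s" U] by (simp add: pstring_def)
  qed
  moreover have "hs U = 0" using a l height_take[of "2*s" U] by (simp add: pstring_def)
  ultimately show "length U = 2 * s \<and> dyck U" using l by (simp add: dyck_def)
next
  assume "length U = 2 * s \<and> dyck U"
  then show "pstring s U" using height_take[of _ U] by (auto simp: pstring_def dyck_def)
qed

lemma all_take_append: "(\<forall>j. P (take j (a @ b))) \<longleftrightarrow> (\<forall>j. P (take j a)) \<and> (\<forall>j. P (a @ take j b))"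
proof safe
  fix j assume "\<forall>j. P (take j (a @ b))"
  then show "P (take j a)"
  proof (cases "j \<le> length a")
    case True then show ?thesis using \<open>\<forall>j. P (take j (a @ b))\<close>[rule_format, of j] by simp
  next
    case False then show ?thesis using \<open>\<forall>j. P (take j (a @ b))\<close>[rule_format, of "length a"] by simp
  qed
next
  fix j assume "\<forall>j. P (take j (a @ b))"
  moreover have "take (length a + j) (a @ b) = a @ take j b" by simp
  ultimately show "P (a @ take j b)" by metis
next
  fix j assume "\<forall>j. P (take j a)" "\<forall>j. P (a @ take j b)"
  then show "P (take j (a @ b))"
    by (cases "j \<le> length a") auto
qed

lemma dyck_ins: "dyck (a @ True # False # b) \<longleftrightarrow> dyck (a @ b)"
proof -
  have e: "(\<forall>j. 0 \<le> hs (a @ take j (True # False # b))) \<longleftrightarrow>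
        (0 \<le> hs a \<and> (\<forall>j. 0 \<le> hs a + hs (take j b)))" (is "?L \<longleftrightarrow> ?R")
  proof
    assume L: ?L
    have "0 \<le> hs a" using L[rule_format, of 0] by simp
    moreover have "0 \<le> hs a + hs (take j b)" for j using L[rule_format, of "Suc (Suc j)"] by simp
    ultimately show ?R by blast
  next
    assume R: ?R
    show ?L
    proof
      fix j show "0 \<le> hs (a @ take j (True # False # b))"
        using R by (cases j; cases "j - 1") auto
    qed
  qed
  have e2: "(\<forall>j. 0 \<le> hs (a @ take j b)) \<longleftrightarrow> (\<forall>j. 0 \<le> hs a + hs (take j b))" by simp
  have e3: "(\<forall>j. 0 \<le> hs (take j a)) \<Longrightarrow> 0 \<le> hs a" by (metis take_all_iff le_refl)
  have "dyck (a @ True # False # b) \<longleftrightarrow> (\<forall>j. 0 \<le> hs (take j a)) \<and> ?R \<and> hs a + hs b = 0"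
    unfolding dyck_def all_take_append[of "\<lambda>x. 0 \<le> hs x" a "True # False # b"] e by simp
  moreover have "dyck (a @ b) \<longleftrightarrow> (\<forall>j. 0 \<le> hs (take j a)) \<and> (\<forall>j. 0 \<le> hs a + hs (take j b)) \<and> hs a + hs b = 0"
    unfolding dyck_def all_take_append[of "\<lambda>x. 0 \<le> hs x" a b] by simp
  ultimately show ?thesis using e3 by auto
qed


lemma split_pair:
  assumes "d + 2 \<le> length U" "U ! d" "\<not> U ! (d + 1)"
  shows "U = take d U @ True # False # drop (d + 2) U"
proof -
  have "drop d U = U ! d # U ! (d+1) # drop (d + 2) U"
    using assms(1) by (metis Cons_nth_drop_Suc Suc_eq_plus1 add_2_eq_Suc' add_lessD1 less_eq_Suc_le add_Suc_right)
  then show ?thesis using assms by (metis append_take_drop_id)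
qed

lemma remove_bij:
  assumes "d + 2 \<le> 2 * s"
  shows "bij_betw (\<lambda>U. take d U @ drop (d + 2) U)
     {U. pstring s U \<and> U ! d \<and> \<not> U ! (d + 1) \<and> Q (take d U)}
     {V. pstring (s - 1) V \<and> Q (take d V)}"
proof (rule bij_betw_byWitness[where f' = "\<lambda>V. take d V @ True # False # drop d V"])
  show "\<forall>a\<in>{U. pstring s U \<and> U ! d \<and> \<not> U ! (d + 1) \<and> Q (take d U)}.
         take d (take d a @ drop (d + 2) a) @ True # False # drop d (take d a @ drop (d + 2) a) = a"
  proof
    fix U assume "U \<in> {U. pstring s U \<and> U ! d \<and> \<not> U ! (d + 1) \<and> Q (take d U)}"
    then have "d + 2 \<le> length U" "U ! d" "\<not> U ! (d + 1)" using assms by (auto simp: pstring_def)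
    then show "take d (take d U @ drop (d + 2) U) @ True # False # drop d (take d U @ drop (d + 2) U) = U"
      using split_pair[of d U] by (simp add: min_def)
  qed
  show "\<forall>a'\<in>{V. pstring (s - 1) V \<and> Q (take d V)}.
       take d (take d a' @ True # False # drop d a') @ drop (d + 2) (take d a' @ True # False # drop d a') = a'"
  proof
    fix V assume "V \<in> {V. pstring (s - 1) V \<and> Q (take d V)}"
    then have "d \<le> length V" using assms by (auto simp: pstring_def)
    then show "take d (take d V @ True # False # drop d V) @ drop (d + 2) (take d V @ True # False # drop d V) = V"
      by (simp add: min_def)
  qed
  show "(\<lambda>U. take d U @ drop (d + 2) U) ` {U. pstring s U \<and> U ! d \<and> \<not> U ! (d + 1) \<and> Q (take d U)}
    \<subseteq> {V. pstring (s - 1) V \<and> Q (take d V)}"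
  proof clarify
    fix U assume U: "pstring s U" "U ! d" "\<not> U ! (d + 1)" "Q (take d U)"
    then have l: "d + 2 \<le> length U" "length U = 2 * s" using assms by (auto simp: pstring_def)
    have "dyck U" using U by (simp add: pstring_dyck)
    then have "dyck (take d U @ drop (d + 2) U)" using split_pair[of d U] U l dyck_ins by metis
    moreover have "length (take d U @ drop (d + 2) U) = 2 * (s - 1)" using l by simp
    moreover have tk: "take d (take d U @ drop (d + 2) U) = take d U" using l by simp
    ultimately show "pstring (s - 1) (take d U @ drop (d + 2) U) \<and> Q (take d (take d U @ drop (d + 2) U))"
      unfolding tk using U by (simp add: pstring_dyck del: take_append)
  qed
  show "(\<lambda>V. take d V @ True # False # drop d V) ` {V. pstring (s - 1) V \<and> Q (take d V)}
    \<subseteq> {U. pstring s U \<and> U ! d \<and> \<not> U ! (d + 1) \<and> Q (take d U)}"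
  proof clarify
    fix V assume V: "pstring (s - 1) V" "Q (take d V)"
    then have l: "d \<le> length V" "length V = 2 * s - 2" using assms by (auto simp: pstring_def)
    have "dyck V" using V by (simp add: pstring_dyck)
    then have "dyck (take d V @ True # False # drop d V)" using dyck_ins by simp
    moreover have "length (take d V @ True # False # drop d V) = 2 * s" using l assms by simp
    ultimately show "pstring s (take d V @ True # False # drop d V) \<and>
           (take d V @ True # False # drop d V) ! d \<and>
           \<not> (take d V @ True # False # drop d V) ! (d + 1) \<and>
           Q (take d (take d V @ True # False # drop d V))"
      using V l by (simp add: pstring_dyck nth_append)
  qed
qed

definition pat :: "nat set \<Rightarrow> bool list \<Rightarrow> bool" where
  "pat D U \<longleftrightarrow> (\<forall>d\<in>D. U ! d \<and> \<not> U ! (d + 1))"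

lemma pat_take:
  assumes "\<And>e. e \<in> D0 \<Longrightarrow> e + 2 \<le> d"
  shows "pat D0 (take d U) \<longleftrightarrow> pat D0 U"
proof -
  have "take d U ! e = U ! e \<and> take d U ! (e + 1) = U ! (e + 1)" if "e \<in> D0" for e
    using assms[OF that] by simp
  then show ?thesis unfolding pat_def by simp
qed

lemma pat_card:
  "finite D \<Longrightarrow> card D = n \<Longrightarrow> (\<forall>d\<in>D. \<forall>e\<in>D. d \<noteq> e \<longrightarrow> d + 2 \<le> e \<or> e + 2 \<le> d) \<Longrightarrow>
   (\<forall>d\<in>D. d + 2 \<le> 2 * s) \<Longrightarrow>
   card {U. pstring s U \<and> pat D U} = card (pstrings (s - n))"
proof (induction n arbitrary: D s)
  case 0
  then show ?case by (simp add: pat_def pstrings_def)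
next
  case (Suc n)
  define d where "d = Max D"
  define D0 where "D0 = D - {d}"
  have ne: "D \<noteq> {}" using Suc.prems by auto
  have dD: "d \<in> D" using ne Suc.prems(1) by (simp add: d_def)
  have lt: "e + 2 \<le> d" if "e \<in> D0" for e
  proof -
    have "e \<le> d" "e \<noteq> d" "e \<in> D" using that Suc.prems(1) by (auto simp: D0_def d_def)
    then show ?thesis using Suc.prems(3) dD by force
  qed
  have d2: "d + 2 \<le> 2 * s" using Suc.prems(4) dD by auto
  have patD: "pat D U \<longleftrightarrow> U ! d \<and> \<not> U ! (d + 1) \<and> pat D0 (take d U)" for U
  proof -
    have "pat D0 (take d U) \<longleftrightarrow> pat D0 U" using lt by (rule pat_take)
    moreover have "D = insert d D0" using dD by (auto simp: D0_def)
    ultimately show ?thesis unfolding pat_def by auto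
  qed
  have "card {U. pstring s U \<and> pat D U} = card {U. pstring s U \<and> U ! d \<and> \<not> U ! (d + 1) \<and> pat D0 (take d U)}"
    using patD by simp
  also have "\<dots> = card {V. pstring (s - 1) V \<and> pat D0 (take d V)}"
    using remove_bij[OF d2, of "pat D0"] by (rule bij_betw_same_card)
  also have "\<dots> = card {V. pstring (s - 1) V \<and> pat D0 V}"
  proof -
    have "pat D0 (take d U) \<longleftrightarrow> pat D0 U" for U using lt by (rule pat_take)
    then show ?thesis by simp
  qed
  also have "\<dots> = card (pstrings (s - 1 - n))"
  proof (rule Suc.IH)
    show "finite D0" "card D0 = n" using Suc.prems dD by (auto simp: D0_def)
    show "\<forall>d\<in>D0. \<forall>e\<in>D0. d \<noteq> e \<longrightarrow> d + 2 \<le> e \<or> e + 2 \<le> d" using Suc.prems(3) by (auto simp: D0_def)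
    show "\<forall>da\<in>D0. da + 2 \<le> 2 * (s - 1)" using lt d2 by fastforce
  qed
  finally show ?case by simp
qed



lemma hs_filter: "hs xs = 2 * int (length (filter id xs)) - int (length xs)"
  by (induction xs) (auto simp: val_def)

lemma fin_len: "finite {xs :: bool list. length xs = N}"
  using finite_lists_length_eq[of "UNIV :: bool set" N] by simp

lemma card_bool_lists: "card {xs :: bool list. length xs = N \<and> length (filter id xs) = m} = N choose m"
proof (induction N arbitrary: m)
  case 0
  have e: "{xs :: bool list. length xs = 0 \<and> length (filter id xs) = m} = (if m = 0 then {[]} else {})" by auto
  show ?case by (subst e) auto
next
  case (Suc N)
  show ?case
  proof (cases m)
    case 0
    have e: "{xs :: bool list. length xs = Suc N \<and> length (filter id xs) = m} = {replicate (Suc N) False}"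
    proof (rule set_eqI, rule iffI)
      fix xs assume "xs \<in> {xs :: bool list. length xs = Suc N \<and> length (filter id xs) = m}"
      then have a: "length xs = Suc N" "filter id xs = []" using 0 by auto
      then have "\<forall>y\<in>set xs. y = False" by (auto simp: filter_empty_conv)
      then have "replicate (length xs) False = xs" by (rule replicate_length_same)
      then show "xs \<in> {replicate (Suc N) False}" using a by simp
    next
      fix xs assume "xs \<in> {replicate (Suc N) False}"
      then show "xs \<in> {xs :: bool list. length xs = Suc N \<and> length (filter id xs) = m}" using 0 by simp
    qed
    show ?thesis using 0 by (subst e) simp
  next
    case (Suc m')
    have eq1: "{xs :: bool list. length xs = Suc N \<and> length (filter id xs) = m} =
       Cons True ` {xs. length xs = N \<and> length (filter id xs) = m'} \<union>
       Cons False ` {xs. length xs = N \<and> length (filter id xs) = m}" (is "?L = ?R")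
    proof (rule set_eqI)
      fix xs show "xs \<in> ?L \<longleftrightarrow> xs \<in> ?R"
      proof (cases xs)
        case Nil then show ?thesis by auto
      next
        case (Cons y ys) then show ?thesis using Suc by (cases y) (auto simp: image_iff)
      qed
    qed
    have eq2: "card (Cons True ` {xs. length xs = N \<and> length (filter id xs) = m'} \<union>
       Cons False ` {xs. length xs = N \<and> length (filter id xs) = m}) = card {xs :: bool list. length xs = N \<and> length (filter id xs) = m'} +
       card {xs :: bool list. length xs = N \<and> length (filter id xs) = m}"
    proof -
      have f1: "finite {xs :: bool list. length xs = N \<and> length (filter id xs) = m'}"
        by (rule finite_subset[OF _ fin_len[of N]]) blast
      have f2: "finite {xs :: bool list. length xs = N \<and> length (filter id xs) = m}"
        by (rule finite_subset[OF _ fin_len[of N]]) blast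
      have d: "Cons True ` {xs. length xs = N \<and> length (filter id xs) = m'} \<inter>
       Cons False ` {xs. length xs = N \<and> length (filter id xs) = m} = {}" by blast
      show ?thesis using card_Un_disjoint[OF finite_imageI[OF f1] finite_imageI[OF f2] d]
        by (simp add: card_image)
    qed
    show ?thesis by (subst eq1, subst eq2) (simp add: Suc Suc.IH)
  qed
qed

definition fhit :: "bool list \<Rightarrow> nat" where "fhit xs = (LEAST j. hs (take j xs) = -1)"
definition rfl :: "bool list \<Rightarrow> bool list" where
  "rfl xs = take (fhit xs) xs @ map Not (drop (fhit xs) xs)"

lemma hs_map_Not: "hs (map Not xs) = - hs xs"
  by (induction xs) (auto simp: val_def)

lemma ivt: "hs (take j xs) < 0 \<Longrightarrow> \<exists>i. hs (take i xs) = -1"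
proof (induction j)
  case 0 then show ?case by simp
next
  case (Suc j)
  show ?case
  proof (cases "j < length xs")
    case True
    then have e: "hs (take (Suc j) xs) = hs (take j xs) + val (xs ! j)"
      by (simp add: take_Suc_conv_app_nth)
    show ?thesis
    proof (cases "hs (take j xs) < 0")
      case True then show ?thesis using Suc.IH by blast
    next
      case False
      then have "hs (take (Suc j) xs) = -1" using e Suc.prems by (auto simp: val_def split: if_splits)
      then show ?thesis by blast
    qed
  next
    case False
    then show ?thesis using Suc by simp
  qed
qed

lemma fhit_props:
  assumes "\<exists>i. hs (take i xs) = -1"
  shows "hs (take (fhit xs) xs) = -1" "fhit xs \<le> length xs" "\<And>j. j < fhit xs \<Longrightarrow> hs (take j xs) \<noteq> -1"
proof -
  show h: "hs (take (fhit xs) xs) = -1" using assms unfolding fhit_def by (rule LeastI_ex)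
  show "\<And>j. j < fhit xs \<Longrightarrow> hs (take j xs) \<noteq> -1" unfolding fhit_def by (rule not_less_Least)
  show "fhit xs \<le> length xs"
  proof (rule ccontr)
    assume "\<not> fhit xs \<le> length xs"
    then have "length xs < fhit xs" by simp
    moreover have "hs (take (length xs) xs) = -1" using h \<open>\<not> fhit xs \<le> length xs\<close> by simp
    ultimately show False using not_less_Least[of "length xs" "\<lambda>j. hs (take j xs) = -1"] unfolding fhit_def by simp
  qed
qed

lemma rfl_props:
  assumes "\<exists>i. hs (take i xs) = -1"
  shows "length (rfl xs) = length xs" "hs (rfl xs) = -2 - hs xs" "\<exists>i. hs (take i (rfl xs)) = -1"
    "rfl (rfl xs) = xs"
proof -
  define j where "j = fhit xs"
  have h: "hs (take j xs) = -1" "j \<le> length xs" "\<And>i. i < j \<Longrightarrow> hs (take i xs) \<noteq> -1"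
    using fhit_props[OF assms] by (auto simp: j_def)
  have r: "rfl xs = take j xs @ map Not (drop j xs)" by (simp add: rfl_def j_def)
  show "length (rfl xs) = length xs" using r h by simp
  have "hs xs = hs (take j xs) + hs (drop j xs)" by (metis append_take_drop_id hs_simps(3))
  then show "hs (rfl xs) = -2 - hs xs" using r h by (simp add: hs_map_Not)
  have tk: "take i (rfl xs) = take i xs" if "i \<le> j" for i using r h that by (simp add: min_def)
  show ex: "\<exists>i. hs (take i (rfl xs)) = -1" using tk[OF le_refl] h(1) by metis
  have "fhit (rfl xs) = j"
  proof -
    have "hs (take j (rfl xs)) = -1" using tk h by simp
    moreover have "\<And>i. i < j \<Longrightarrow> hs (take i (rfl xs)) \<noteq> -1" using tk h by simp
    ultimately show ?thesis unfolding fhit_def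
      by (metis (mono_tags, lifting) Least_equality not_le)
  qed
  then show "rfl (rfl xs) = xs" using r h
    by (simp add: rfl_def min_def comp_def)
qed

lemma card_dyck:
  "card (pstrings n) = catalan n"
proof (cases n)
  case 0
  have "pstrings 0 = {[]}"
  proof -
    have "dyck []" by (simp add: dyck_def)
    then show ?thesis by (auto simp: pstrings_def pstring_dyck)
  qed
  then show ?thesis using 0 by (simp add: catalan_def)
next
  case (Suc n')
  define All where "All = {xs :: bool list. length xs = 2 * n \<and> hs xs = 0}"
  define Bad where "Bad = {xs :: bool list. length xs = 2 * n \<and> hs xs = 0 \<and> (\<exists>i. hs (take i xs) = -1)}"
  define T where "T = {xs :: bool list. length xs = 2 * n \<and> hs xs = -2}"
  have fin: "finite {xs :: bool list. length xs = 2 * n}" by (rule fin_len)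
  have "All = pstrings n \<union> Bad"
  proof -
    have "dyck xs \<longleftrightarrow> hs xs = 0 \<and> \<not> (\<exists>i. hs (take i xs) = -1)" for xs
    proof
      assume "dyck xs" then show "hs xs = 0 \<and> \<not> (\<exists>i. hs (take i xs) = -1)"
        unfolding dyck_def by (metis add.inverse_inverse neg_0_le_iff_le not_one_le_zero)
    next
      assume a: "hs xs = 0 \<and> \<not> (\<exists>i. hs (take i xs) = -1)"
      then have "\<forall>j. 0 \<le> hs (take j xs)" using ivt[of _ xs] by (meson not_le)
      then show "dyck xs" using a unfolding dyck_def by simp
    qed
    then show ?thesis by (auto simp: All_def Bad_def pstrings_def pstring_dyck)
  qed
  moreover have "pstrings n \<inter> Bad = {}"
  proof -
    have "x \<notin> Bad" if "x \<in> pstrings n" for x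
    proof
      assume "x \<in> Bad"
      then obtain i where "hs (take i x) = -1" by (auto simp: Bad_def)
      moreover have "0 \<le> hs (take i x)" using that by (simp add: pstrings_def pstring_dyck dyck_def)
      ultimately show False by simp
    qed
    then show ?thesis by blast
  qed
  moreover have "finite (pstrings n)"
    by (rule finite_subset[OF _ fin]) (auto simp: pstrings_def pstring_dyck)
  moreover have "finite Bad"
    by (rule finite_subset[OF _ fin]) (auto simp: Bad_def)
  ultimately have cA: "card All = card (pstrings n) + card Bad"
    by (simp add: card_Un_disjoint)
  have "bij_betw rfl Bad T"
  proof (rule bij_betw_byWitness[where f' = rfl])
    show "\<forall>a\<in>Bad. rfl (rfl a) = a" using rfl_props by (auto simp: Bad_def)
    show "\<forall>a\<in>T. rfl (rfl a) = a"
    proof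
      fix a assume "a \<in> T"
      then have "hs (take (length a) a) < 0" by (simp add: T_def)
      then show "rfl (rfl a) = a" using ivt rfl_props by blast
    qed
    show "rfl ` Bad \<subseteq> T"
    proof
      fix b assume "b \<in> rfl ` Bad"
      then obtain a where a: "a \<in> Bad" "b = rfl a" by auto
      then have ex: "\<exists>i. hs (take i a) = -1" by (simp add: Bad_def)
      have "length a = 2 * n" "hs a = 0" using a(1) by (auto simp: Bad_def)
      then have "length b = 2 * n" "hs b = -2" using rfl_props(1,2)[OF ex] a(2) by simp_all
      then show "b \<in> T" by (simp add: T_def)
    qed
    show "rfl ` T \<subseteq> Bad"
    proof
      fix b assume "b \<in> rfl ` T"
      then obtain a where a: "a \<in> T" "b = rfl a" by auto
      then have "hs (take (length a) a) < 0" by (simp add: T_def)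
      then have "\<exists>i. hs (take i a) = -1" using ivt by blast
      then show "b \<in> Bad" using rfl_props[of a] a by (auto simp: Bad_def T_def)
    qed
  qed
  then have cB: "card Bad = card T" by (rule bij_betw_same_card)
  have "All = {xs. length xs = 2 * n \<and> length (filter id xs) = n}"
    by (auto simp: All_def hs_filter)
  then have cAll: "card All = 2 * n choose n" by (simp add: card_bool_lists)
  have "T = {xs. length xs = 2 * n \<and> length (filter id xs) = n'}"
    using Suc by (auto simp: T_def hs_filter)
  then have cT: "card T = 2 * n choose n'" by (simp add: card_bool_lists)
  have key: "(2 * n choose n') * (n + 1) = (2 * n choose n) * n"
  proof -
    have "((2 * Suc n') choose n') * (Suc n' + 1) = ((2 * Suc n') choose (Suc n')) * Suc n'"
      by (metis Suc_eq_plus1 Suc_times_binomial_add add_Suc mult.commute mult_2)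
    then show ?thesis using Suc by simp
  qed
  have cd: "card (pstrings n) = (2 * n choose n) - (2 * n choose n')" using cA cB cT cAll by simp
  have "card (pstrings n) * (n + 1) = 2 * n choose n"
  proof -
    have "card (pstrings n) * (n + 1) = (2 * n choose n) * (n + 1) - (2 * n choose n') * (n + 1)"
      using cd by (simp only: diff_mult_distrib)
    also have "\<dots> = 2 * n choose n" using key by (simp add: algebra_simps)
    finally show ?thesis .
  qed
  then have "(2 * n choose n) div (n + 1) = card (pstrings n)" by (metis div_mult_self_is_m zero_less_Suc Suc_eq_plus1)
  then show ?thesis unfolding catalan_def by (rule sym)
qed



lemma A_set_Suc: "A_set (Suc n) k = {A. A \<subseteq> {1..n} \<and> card A = k \<and>
      (\<forall>i\<in>A. \<forall>j\<in>A. i \<noteq> j \<longrightarrow> i + 2 \<le> j \<or> j + 2 \<le> i)}"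
  by (simp add: A_set_def)

lemma finite_A_set: "finite (A_set v k)"
  unfolding A_set_def by (rule finite_subset[of _ "Pow {1..v-1}"]) auto

lemma A_set_0: "A_set (Suc n) 0 = {{}}"
proof -
  have "A = {}" if "A \<subseteq> {1..n}" "card A = 0" for A :: "nat set"
    using that finite_subset[OF that(1) finite_atLeastAtMost] by simp
  then show ?thesis unfolding A_set_Suc by auto
qed

lemma card_A_set: "card (A_set (Suc n) k) = (n + 1 - k) choose k"
proof (induction n arbitrary: k rule: less_induct)
  case (less n)
  show ?case
  proof (cases k)
    case 0 then show ?thesis by (simp add: A_set_0)
  next
    case kS: (Suc k')
    show ?thesis
    proof (cases n)
      case 0
      have "A_set (Suc n) k = {}" using 0 kS unfolding A_set_Suc by auto
      then show ?thesis using 0 kS by simp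
    next
      case n1: (Suc n1)
      show ?thesis
      proof (cases n1)
        case 0
        have "A_set (Suc n) k = (if k = 1 then {{1}} else {})" using 0 n1 kS unfolding A_set_Suc
          by (auto simp: subset_singleton_iff card_1_singleton_iff)
        then show ?thesis using 0 n1 kS by (cases k') auto
      next
        case (Suc m)
        have nm: "n = Suc (Suc m)" using n1 Suc by simp
        have split: "A_set (Suc n) k = A_set (Suc (Suc m)) k \<union> insert n ` A_set (Suc m) k'"
        proof (rule set_eqI, rule iffI)
          fix A assume A: "A \<in> A_set (Suc n) k"
          show "A \<in> A_set (Suc (Suc m)) k \<union> insert n ` A_set (Suc m) k'"
          proof (cases "n \<in> A")
            case False
            then have "A \<subseteq> {1..Suc m}" using A nm unfolding A_set_Suc by (auto simp: le_Suc_eq)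
            then show ?thesis using A unfolding A_set_Suc by auto
          next
            case True
            have fA: "finite A" using A unfolding A_set_Suc using finite_subset[OF _ finite_atLeastAtMost] by blast
            have "A - {n} \<subseteq> {1..m}"
            proof
              fix x assume x: "x \<in> A - {n}"
              then have "x \<le> n" "x \<noteq> n" "1 \<le> x" using A unfolding A_set_Suc by auto
              moreover have "x + 2 \<le> n \<or> n + 2 \<le> x" using A x True unfolding A_set_Suc by auto
              ultimately show "x \<in> {1..m}" using nm by auto
            qed
            moreover have "card (A - {n}) = k'" using fA True A kS unfolding A_set_Suc by auto
            ultimately have "A - {n} \<in> A_set (Suc m) k'" using A unfolding A_set_Suc by auto
            moreover have "A = insert n (A - {n})" using True by auto
            ultimately show ?thesis by blast
          qed
        next
          fix A assume "A \<in> A_set (Suc (Suc m)) k \<union> insert n ` A_set (Suc m) k'"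
          then show "A \<in> A_set (Suc n) k"
          proof
            assume "A \<in> A_set (Suc (Suc m)) k" then show ?thesis using nm unfolding A_set_Suc by auto
          next
            assume "A \<in> insert n ` A_set (Suc m) k'"
            then obtain B where B: "B \<in> A_set (Suc m) k'" "A = insert n B" by auto
            have fB: "finite B" using B unfolding A_set_Suc using finite_subset[OF _ finite_atLeastAtMost] by blast
            have "n \<notin> B" using B nm unfolding A_set_Suc by auto
            then show ?thesis using B fB nm kS unfolding A_set_Suc by fastforce
          qed
        qed
        have disj: "A_set (Suc (Suc m)) k \<inter> insert n ` A_set (Suc m) k' = {}"
          using nm unfolding A_set_Suc by auto
        have inj: "inj_on (insert n) (A_set (Suc m) k')"
        proof (rule inj_onI)
          fix A B assume "A \<in> A_set (Suc m) k'" "B \<in> A_set (Suc m) k'" "insert n A = insert n B"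
          moreover have "n \<notin> A" "n \<notin> B" using calculation(1,2) nm unfolding A_set_Suc by auto
          ultimately show "A = B" using insert_ident by metis
        qed
        have "card (A_set (Suc n) k) = card (A_set (Suc (Suc m)) k) + card (A_set (Suc m) k')"
          unfolding split by (subst card_Un_disjoint) (auto simp: finite_A_set disj card_image[OF inj])
        also have "\<dots> = (Suc m + 1 - k choose k) + (m + 1 - k' choose k')"
          using less.IH nm by simp
        also have "\<dots> = (n + 1 - k) choose k"
        proof (cases "k' \<le> m + 1")
          case True
          then have "n + 1 - k = Suc (m + 1 - k')" using nm kS by simp
          then show ?thesis using kS True by (simp add: Suc_diff_le)
        next
          case False
          then show ?thesis using kS nm by simp
        qed
        finally show ?thesis .
      qed
    qed
  qed
qed



lemma height_Suc: "height U (Suc j) = height U j + (if U ! j then 1 else -1)"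
  by (simp add: height_def)

lemma matched_adj:
  assumes "1 \<le> a" "a + 1 \<le> length U"
  shows "matched U a (a + 1) \<longleftrightarrow> U ! (a - 1) \<and> \<not> U ! a"
proof -
  obtain b where b: "a = Suc b" using assms(1) by (cases a) auto
  have "(\<forall>c. a \<le> c \<and> c < a + 1 \<longrightarrow> height U c > height U (a - 1)) \<longleftrightarrow> height U a > height U (a - 1)"
    by (auto simp: b less_Suc_eq)
  then show ?thesis using assms unfolding matched_def b by (auto simp: height_Suc)
qed

lemma pierced_iff:
  assumes "length U = 2 * s" "length W = 2 * s"
  shows "pierced s U W i \<longleftrightarrow> 1 \<le> i \<and> i \<le> 2 * s - 2 \<and> U ! (i - 1) \<and> \<not> U ! i \<and> W ! i \<and> \<not> W ! (i + 1)"
proof (cases "1 \<le> i \<and> i \<le> 2 * s - 2")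
  case True
  then have "matched U i (i + 1) \<longleftrightarrow> U ! (i - 1) \<and> \<not> U ! i" using assms by (intro matched_adj) auto
  moreover have "matched W (i + 1) (i + 1 + 1) \<longleftrightarrow> W ! (i + 1 - 1) \<and> \<not> W ! (i + 1)"
    using True assms by (intro matched_adj) auto
  ultimately show ?thesis unfolding pierced_def by (simp add: add.assoc)
next
  case False then show ?thesis unfolding pierced_def by auto
qed

lemma lemma3p3_1:
  fixes s k :: nat
  assumes "1 \<le> s" and "k \<le> s"
  shows "O_count s k = (2 * s - k - 1 choose k) * (catalan (s - k))\<^sup>2"
proof -
  have "O_count s k = card (A_set (2 * s - 1) k) * (card (pstrings (s - k)) * card (pstrings (s - k)))"
    unfolding O_count_def by (simp add: card_cartesian_product)
  moreover have "2 * s - 1 = Suc (2 * s - 2)" using assms by simp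
  moreover have "2 * s - 2 + 1 - k = 2 * s - k - 1" using assms by simp
  ultimately show ?thesis by (simp add: card_A_set card_dyck power2_eq_square)
qed


definition pc :: "nat \<Rightarrow> bool list \<times> bool list \<Rightarrow> nat set" where
  "pc s x = {i \<in> {1..2 * s - 2}. pierced s (fst x) (snd x) i}"

lemma pc_A_set:
  assumes "pstring s U" "pstring s W"
  shows "pc s (U, W) \<in> A_set (2 * s - 1) (num_pierced s U W)"
proof -
  have l: "length U = 2 * s" "length W = 2 * s" using assms by (auto simp: pstring_def)
  have "i + 2 \<le> j \<or> j + 2 \<le> i" if "i \<in> pc s (U, W)" "j \<in> pc s (U, W)" "i \<noteq> j" for i j
  proof (rule ccontr)
    assume "\<not> (i + 2 \<le> j \<or> j + 2 \<le> i)"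
    then have "j = i + 1 \<or> i = j + 1" using that(3) by auto
    moreover have "U ! (i - 1) \<and> \<not> U ! i" "U ! (j - 1) \<and> \<not> U ! j"
      using that(1,2) pierced_iff[OF l] by (auto simp: pc_def)
    ultimately show False by auto
  qed
  then show ?thesis unfolding A_set_def pc_def num_pierced_def by auto
qed

lemma np_le:
  assumes "pstring s U" "pstring s W" "1 \<le> s"
  shows "num_pierced s U W \<le> s"
proof -
  let ?m = "num_pierced s U W"
  have "A_set (2 * s - 1) ?m \<noteq> {}" using pc_A_set[OF assms(1,2)] by auto
  then have "card (A_set (2 * s - 1) ?m) \<noteq> 0" using finite_A_set by auto
  moreover have "2 * s - 1 = Suc (2 * s - 2)" using assms by simp
  ultimately have "(2 * s - 2 + 1 - ?m) choose ?m \<noteq> 0" using card_A_set by metis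
  then have "?m \<le> 2 * s - 2 + 1 - ?m" by simp
  then show ?thesis by linarith
qed


lemma fixedB_card:
  assumes s: "1 \<le> s" and B: "B \<in> A_set (2 * s - 1) k"
  shows "card {x \<in> pstrings s \<times> pstrings s. B \<subseteq> pc s x} = card (pstrings (s - k)) * card (pstrings (s - k))"
proof -
  have Bs: "B \<subseteq> {1..2 * s - 2}" "card B = k" and gap: "\<forall>i\<in>B. \<forall>j\<in>B. i \<noteq> j \<longrightarrow> i + 2 \<le> j \<or> j + 2 \<le> i"
    using B unfolding A_set_def by (auto simp: numeral_2_eq_2)
  have fB: "finite B" using Bs(1) finite_subset by blast
  define D1 where "D1 = (\<lambda>i. i - 1) ` B"
  have inj: "inj_on (\<lambda>i. i - 1) B"
  proof (rule inj_onI)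
    fix x y assume "x \<in> B" "y \<in> B" "x - 1 = y - 1"
    moreover have "1 \<le> x" "1 \<le> y" using calculation(1,2) Bs(1) by auto
    ultimately show "x = y" by linarith
  qed
  have cD1: "card (D1) = k" using inj Bs(2) by (simp add: D1_def card_image)
  have c1: "card {U. pstring s U \<and> pat D1 U} = card (pstrings (s - k))"
  proof (rule pat_card)
    show "finite D1" using fB by (simp add: D1_def)
    show "card D1 = k" by (rule cD1)
    show "\<forall>d\<in>D1. \<forall>e\<in>D1. d \<noteq> e \<longrightarrow> d + 2 \<le> e \<or> e + 2 \<le> d"
    proof (intro ballI impI)
      fix d e assume "d \<in> D1" "e \<in> D1" "d \<noteq> e"
      then obtain i j where "i \<in> B" "j \<in> B" "d = i - 1" "e = j - 1" by (auto simp: D1_def)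
      moreover have "1 \<le> i" "1 \<le> j" using calculation Bs(1) by auto
      ultimately show "d + 2 \<le> e \<or> e + 2 \<le> d" using gap \<open>d \<noteq> e\<close> by fastforce
    qed
    show "\<forall>d\<in>D1. d + 2 \<le> 2 * s"
    proof
      fix d assume "d \<in> D1"
      then obtain i where "i \<in> B" "d = i - 1" by (auto simp: D1_def)
      moreover have "1 \<le> i" "i \<le> 2 * s - 2" using calculation(1) Bs(1) by auto
      ultimately show "d + 2 \<le> 2 * s" by linarith
    qed
  qed
  have c2: "card {W. pstring s W \<and> pat B W} = card (pstrings (s - k))"
  proof (rule pat_card)
    show "finite B" by (rule fB)
    show "card B = k" by (rule Bs(2))
    show "\<forall>d\<in>B. \<forall>e\<in>B. d \<noteq> e \<longrightarrow> d + 2 \<le> e \<or> e + 2 \<le> d" by (rule gap)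
    show "\<forall>d\<in>B. d + 2 \<le> 2 * s"
    proof
      fix d assume "d \<in> B"
      then have "d \<le> 2 * s - 2" using Bs(1) by auto
      then show "d + 2 \<le> 2 * s" using s by linarith
    qed
  qed
  have eq: "{x \<in> pstrings s \<times> pstrings s. B \<subseteq> pc s x} =
      {U. pstring s U \<and> pat D1 U} \<times> {W. pstring s W \<and> pat B W}"
  proof (rule set_eqI)
    fix x :: "bool list \<times> bool list"
    obtain U W where x: "x = (U, W)" by (cases x)
    show "x \<in> {x \<in> pstrings s \<times> pstrings s. B \<subseteq> pc s x} \<longleftrightarrow>
          x \<in> {U. pstring s U \<and> pat D1 U} \<times> {W. pstring s W \<and> pat B W}"
    proof (cases "pstring s U \<and> pstring s W")
      case False then show ?thesis by (auto simp: x pstrings_def)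
    next
      case True
      then have l: "length U = 2 * s" "length W = 2 * s" by (auto simp: pstring_def)
      have "B \<subseteq> pc s (U, W) \<longleftrightarrow> (\<forall>i\<in>B. U ! (i - 1) \<and> \<not> U ! i \<and> W ! i \<and> \<not> W ! (i + 1))"
        using Bs(1) pierced_iff[OF l] by (auto simp: pc_def)
      moreover have "pat D1 U \<longleftrightarrow> (\<forall>i\<in>B. U ! (i - 1) \<and> \<not> U ! i)"
      proof -
        have "i - 1 + 1 = i" if "i \<in> B" for i using that Bs(1) by auto
        then show ?thesis by (auto simp: pat_def D1_def)
      qed
      moreover have "pat B W \<longleftrightarrow> (\<forall>i\<in>B. W ! i \<and> \<not> W ! (i + 1))" by (simp add: pat_def)
      ultimately show ?thesis using True by (auto simp: x pstrings_def)
    qed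
  qed
  show ?thesis unfolding eq card_cartesian_product c1 c2 ..
qed


lemma finite_pstrings: "finite (pstrings s)"
  by (rule finite_subset[OF _ fin_len[of "2 * s"]]) (auto simp: pstrings_def pstring_def)

lemma card_filter_sum: "finite A \<Longrightarrow> card {x \<in> A. P x} = (\<Sum>x\<in>A. if P x then 1 else 0)"
  using sum.inter_filter[of A "\<lambda>_. (1::nat)" P] by simp

lemma lemma3p3_2:
  fixes s k :: nat
  assumes s: "1 \<le> s" and "k \<le> s"
  shows "O_count s k = (\<Sum>m = k..s. (m choose k) * E_count s m)"
proof -
  define PS where "PS = pstrings s \<times> pstrings s"
  define f where "f x = num_pierced s (fst x) (snd x)" for x :: "bool list \<times> bool list"
  define A where "A = A_set (2 * s - 1) k"
  define C where "C = card (pstrings (s - k))"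
  have fPS: "finite PS" by (simp add: PS_def finite_pstrings)
  have fA: "finite A" by (simp add: A_def finite_A_set)
  have E: "E_count s m = card {x \<in> PS. f x = m}" for m
  proof -
    have "{(U, W). pstring s U \<and> pstring s W \<and> num_pierced s U W = m} = {x \<in> PS. f x = m}"
      by (auto simp: PS_def f_def pstrings_def)
    then show ?thesis by (simp add: E_count_def)
  qed
  have "(\<Sum>m = k..s. (m choose k) * E_count s m) = (\<Sum>m \<in> {0..s}. (m choose k) * E_count s m)"
    by (rule sum.mono_neutral_left) auto
  also have "\<dots> = (\<Sum>m \<in> {0..s}. \<Sum>x \<in> {x \<in> PS. f x = m}. f x choose k)"
  proof (rule sum.cong[OF refl])
    fix m
    have "(\<Sum>x \<in> {x \<in> PS. f x = m}. f x choose k) = (\<Sum>x \<in> {x \<in> PS. f x = m}. m choose k)"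
      by (rule sum.cong) auto
    then show "(m choose k) * E_count s m = (\<Sum>x \<in> {x \<in> PS. f x = m}. f x choose k)"
      by (simp add: E)
  qed
  also have "\<dots> = (\<Sum>x \<in> PS. f x choose k)"
  proof (rule sum.group[OF fPS])
    show "finite {0..s}" by simp
    show "f ` PS \<subseteq> {0..s}" using np_le[OF _ _ s] by (auto simp: PS_def f_def pstrings_def)
  qed
  also have "\<dots> = (\<Sum>x \<in> PS. \<Sum>B \<in> A. if B \<subseteq> pc s x then 1 else 0)"
  proof (rule sum.cong[OF refl])
    fix x assume x: "x \<in> PS"
    obtain U W where UW: "x = (U, W)" by (cases x)
    have ps: "pstring s U" "pstring s W" using x by (auto simp: UW PS_def pstrings_def)
    have pA: "pc s x \<in> A_set (2 * s - 1) (f x)" using pc_A_set[OF ps] by (simp add: UW f_def)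
    have fpc: "finite (pc s x)" by (simp add: pc_def)
    have cpc: "card (pc s x) = f x" using pA by (simp add: A_set_def)
    have "{B. B \<subseteq> pc s x \<and> card B = k} = {B \<in> A. B \<subseteq> pc s x}"
      using pA unfolding A_def A_set_def by blast
    then have "f x choose k = card {B \<in> A. B \<subseteq> pc s x}"
      using n_subsets[OF fpc, of k] cpc by simp
    then show "f x choose k = (\<Sum>B \<in> A. if B \<subseteq> pc s x then 1 else 0)"
      using card_filter_sum[OF fA] by simp
  qed
  also have "\<dots> = (\<Sum>B \<in> A. \<Sum>x \<in> PS. if B \<subseteq> pc s x then 1 else 0)"
    by (rule sum.swap)
  also have "\<dots> = (\<Sum>B \<in> A. C * C)"
  proof (rule sum.cong[OF refl])
    fix B assume "B \<in> A"
    then have "card {x \<in> PS. B \<subseteq> pc s x} = C * C"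
      using fixedB_card[OF s] by (simp add: A_def PS_def C_def)
    then show "(\<Sum>x \<in> PS. if B \<subseteq> pc s x then 1 else 0) = C * C"
      using card_filter_sum[OF fPS] by simp
  qed
  also have "\<dots> = O_count s k"
    by (simp add: O_count_def A_def C_def card_cartesian_product)
  finally show ?thesis by simp
qed

theorem lemma3p3:
  fixes s k :: nat
  assumes "1 \<le> s" and "k \<le> s"
  shows "O_count s k = (2 * s - k - 1 choose k) * (catalan (s - k))\<^sup>2 \<and>
         O_count s k = (\<Sum>m = k..s. (m choose k) * E_count s m)"
  using lemma3p3_1[OF assms] lemma3p3_2[OF assms] by simp

end
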